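(* Let $G$ be a connected graph with $n\geq 2$ vertices and $m$ edges. Then for every integer $k\geq 0$, $$R^*(S^k(G))=8^kR^*(G)+\frac{8^k-2^k}{3}m(2m-2n+1).$$
   Context: All graphs are finite, undirected, without loops or multiple edges. For a connected graph $H$ and vertices $i,j$, the resistance distance $\Omega_{ij}$ is the effective resistance between $i$ and $j$ in the electrical network obtained from $H$ by replacing each edge by a unit resistor. With $d_i$ the degree of vertex $i$ in $H$ and the sum over unordered pairs of distinct vertices of $H$, the multiplicative degree-Kirchhoff index is $R^*(H)=\sum_{\{i,j\}\subseteq V(H)}d_id_j\Omega_{ij}$ (degrees and resistances taken in $H$). The subdivision $S(H)$ is the graph obtained from $H$ by replacing every edge with a path of length two. Iterated subdivisions: $S^0(G)=G$ and $S^k(G)=S(S^{k-1}(G))$ for $k\geq1$. *)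

theory Defs
  imports Complex_Main "HOL-Library.Uprod"
begin

type_synonym 'a graph = "'a set \<times> 'a set set"

definition simple_graph :: "'a graph \<Rightarrow> bool" where
  "simple_graph G \<longleftrightarrow> finite (fst G) \<and>
     (\<forall>e\<in>snd G. \<exists>u v. e = {u, v} \<and> u \<noteq> v \<and> u \<in> fst G \<and> v \<in> fst G)"

definition adj :: "'a graph \<Rightarrow> 'a \<Rightarrow> 'a \<Rightarrow> bool" where
  "adj G u v \<longleftrightarrow> {u, v} \<in> snd G"

definition connected_graph :: "'a graph \<Rightarrow> bool" where
  "connected_graph G \<longleftrightarrow> fst G \<noteq> {} \<and> (\<forall>u\<in>fst G. \<forall>v\<in>fst G. (adj G)\<^sup>*\<^sup>* u v)"

definition degree :: "'a graph \<Rightarrow> 'a \<Rightarrow> nat" where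
  "degree G v = card {e \<in> snd G. v \<in> e}"

text \<open>Effective resistance: inject a unit current at i and extract it at j; the
 node potentials x satisfy Kirchhoff's current law with unit resistors on every
 edge, and the effective resistance is the potential difference x i - x j
 (well defined for connected graphs).\<close>
definition resistance :: "'a graph \<Rightarrow> 'a \<Rightarrow> 'a \<Rightarrow> real" where
  "resistance G i j = (THE r. \<exists>x :: 'a \<Rightarrow> real.
      (\<forall>v\<in>fst G. (\<Sum>w\<in>{w \<in> fst G. {v, w} \<in> snd G}. x v - x w)
                   = (if v = i then 1 else 0) - (if v = j then 1 else 0))
      \<and> r = x i - x j)"

text \<open>Multiplicative degree-Kirchhoff index; the sum over unordered pairs of
 distinct vertices is written as half the sum over ordered pairs.\<close>
definition Rstar :: "'a graph \<Rightarrow> real" where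
  "Rstar G = (\<Sum>(i, j)\<in>{(i, j). i \<in> fst G \<and> j \<in> fst G \<and> i \<noteq> j}.
       real (degree G i) * real (degree G j) * resistance G i j) / 2"

text \<open>Vertex universe closed under subdivision: original vertices, and
 midpoint vertices labelled by the (unordered) edge they subdivide.\<close>
datatype 'a sv = Orig 'a | Mid "'a sv uprod"

definition to_upair :: "'a set \<Rightarrow> 'a uprod" where
  "to_upair e = (THE p. set_uprod p = e)"

definition subdivision :: "'a sv graph \<Rightarrow> 'a sv graph" where
  "subdivision G = (fst G \<union> (\<lambda>e. Mid (to_upair e)) ` snd G,
     {{u, Mid (to_upair e)} | u e. e \<in> snd G \<and> u \<in> e})"

definition lift_graph :: "'a graph \<Rightarrow> 'a sv graph" where
  "lift_graph G = (Orig ` fst G, (\<lambda>e. Orig ` e) ` snd G)"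

text \<open>S^k(G), with S^0(G) = G (up to the relabelling v \<mapsto> Orig v).\<close>
definition iter_subdivision :: "nat \<Rightarrow> 'a graph \<Rightarrow> 'a sv graph" where
  "iter_subdivision k G = (subdivision ^^ k) (lift_graph G)"

end

theory Submission
  imports Defs "Jordan_Normal_Form.Determinant"
begin


lemma fredholm:
  fixes K :: "'v \<Rightarrow> 'v \<Rightarrow> real"
  assumes fin: "finite V"
    and inj: "\<And>x. \<forall>v\<in>V. (\<Sum>w\<in>V. K v w * x w) = 0 \<Longrightarrow> \<forall>v\<in>V. x v = 0"
  shows "\<exists>x. \<forall>v\<in>V. (\<Sum>w\<in>V. K v w * x w) = b v"
proof -
  define n where "n = card V"
  obtain h where h: "bij_betw h {0..<n} V" using ex_bij_betw_nat_finite[OF fin] n_def by blast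
  define g where "g = the_inv_into {0..<n} h"
  have g: "\<And>w. w \<in> V \<Longrightarrow> g w < n \<and> h (g w) = w"
    using h unfolding g_def
    by (metis atLeastLessThan_iff bij_betw_def f_the_inv_into_f the_inv_into_into order_refl)
  have hg: "\<And>i. i < n \<Longrightarrow> g (h i) = i" using h unfolding g_def
    by (simp add: bij_betw_def the_inv_into_f_f)
  have hV: "\<And>i. i < n \<Longrightarrow> h i \<in> V" using h by (auto simp: bij_betw_def)
  define A where "A = mat n n (\<lambda>(i,j). K (h i) (h j))"
  have Ac: "A \<in> carrier_mat n n" unfolding A_def by simp
  have reidx: "\<And>i (y::real vec). i < n \<Longrightarrow> dim_vec y = n \<Longrightarrow>
      (A *\<^sub>v y) $ i = (\<Sum>w\<in>V. K (h i) w * y $ (g w))"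
  proof -
    fix i and y :: "real vec" assume i: "i < n" and y: "dim_vec y = n"
    have "(A *\<^sub>v y) $ i = (\<Sum>j\<in>{0..<n}. K (h i) (h j) * y $ j)"
      using i y by (simp add: A_def scalar_prod_def row_def)
    also have "\<dots> = (\<Sum>j\<in>{0..<n}. K (h i) (h j) * y $ (g (h j)))"
      by (rule sum.cong) (auto simp: hg)
    also have "\<dots> = (\<Sum>w\<in>V. K (h i) w * y $ (g w))"
      using sum.reindex_bij_betw[OF h, of "\<lambda>w. K (h i) w * y $ (g w)"] by simp
    finally show "(A *\<^sub>v y) $ i = (\<Sum>w\<in>V. K (h i) w * y $ (g w))" .
  qed
  have "det A \<noteq> 0"
  proof
    assume "det A = 0"
    then obtain y where y: "y \<in> carrier_vec n" "y \<noteq> 0\<^sub>v n" "A *\<^sub>v y = 0\<^sub>v n"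
      using det_0_iff_vec_prod_zero[OF Ac] by blast
    have "\<forall>v\<in>V. (\<Sum>w\<in>V. K v w * y $ (g w)) = 0"
    proof
      fix v assume v: "v \<in> V"
      have "(A *\<^sub>v y) $ (g v) = 0" using y(3) g[OF v] by simp
      then show "(\<Sum>w\<in>V. K v w * y $ (g w)) = 0" using reidx[of "g v" y] g[OF v] y(1) by simp
    qed
    from inj[OF this] have "\<And>i. i < n \<Longrightarrow> y $ i = 0" using hV hg by metis
    then have "y = 0\<^sub>v n" using y(1) by (intro eq_vecI) auto
    with y(2) show False by simp
  qed
  from det_non_zero_imp_unit[OF Ac this, unfolded Units_def, of "()"]
  obtain B where B: "B \<in> carrier_mat n n" and AB: "A * B = 1\<^sub>m n"
    by (auto simp: ring_mat_def)
  define bv where "bv = vec n (\<lambda>i. b (h i))"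
  define y where "y = B *\<^sub>v bv"
  have yc: "y \<in> carrier_vec n" using B unfolding y_def bv_def by simp
  have Ay: "A *\<^sub>v y = bv"
    unfolding y_def using Ac B AB
    by (metis assoc_mult_mat_vec bv_def one_mult_mat_vec vec_carrier)
  show ?thesis
  proof (intro exI ballI)
    fix v assume v: "v \<in> V"
    have "(\<Sum>w\<in>V. K v w * y $ (g w)) = (A *\<^sub>v y) $ (g v)"
      using reidx[of "g v" y] g[OF v] yc by simp
    also have "\<dots> = b v" using Ay g[OF v] by (simp add: bv_def)
    finally show "(\<Sum>w\<in>V. K v w * y $ (g w)) = b v" .
  qed
qed

definition nbrs :: "'v graph \<Rightarrow> 'v \<Rightarrow> 'v set" where
  "nbrs H v = {w \<in> fst H. {v, w} \<in> snd H}"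

definition lap :: "'v graph \<Rightarrow> ('v \<Rightarrow> real) \<Rightarrow> 'v \<Rightarrow> real" where
  "lap H x v = (\<Sum>w\<in>nbrs H v. x v - x w)"

lemma sg_finV: "simple_graph H \<Longrightarrow> finite (fst H)"
  by (simp add: simple_graph_def)

lemma sg_edge: "simple_graph H \<Longrightarrow> e \<in> snd H \<Longrightarrow> \<exists>u v. e = {u, v} \<and> u \<noteq> v \<and> u \<in> fst H \<and> v \<in> fst H"
  by (simp add: simple_graph_def)

lemma sg_finE: "simple_graph H \<Longrightarrow> finite (snd H)"
proof -
  assume s: "simple_graph H"
  have "snd H \<subseteq> Pow (fst H)" using sg_edge[OF s] by blast
  then show ?thesis using sg_finV[OF s] by (meson finite_Pow_iff finite_subset)
qed

lemma sg_edge_sub: "simple_graph H \<Longrightarrow> e \<in> snd H \<Longrightarrow> x \<in> e \<Longrightarrow> x \<in> fst H"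
  using sg_edge by blast

lemma nbrs_sub: "nbrs H v \<subseteq> fst H" by (auto simp: nbrs_def)

lemma nbrs_fin: "simple_graph H \<Longrightarrow> finite (nbrs H v)"
  using nbrs_sub sg_finV finite_subset by metis

lemma nbrs_sym: "w \<in> nbrs H v \<Longrightarrow> v \<in> fst H \<Longrightarrow> v \<in> nbrs H w"
  by (auto simp: nbrs_def insert_commute)

lemma nbrs_irr: "simple_graph H \<Longrightarrow> v \<notin> nbrs H v"
  unfolding nbrs_def using sg_edge[of H "{v}"] by (auto simp: doubleton_eq_iff)

lemma degree_nbrs:
  assumes s: "simple_graph H" and v: "v \<in> fst H"
  shows "Defs.degree H v = card (nbrs H v)"
proof -
  have "bij_betw (\<lambda>w. {v, w}) (nbrs H v) {e \<in> snd H. v \<in> e}"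
  proof (rule bij_betwI')
    show "\<And>x y. x \<in> nbrs H v \<Longrightarrow> y \<in> nbrs H v \<Longrightarrow> ({v, x} = {v, y}) = (x = y)"
      using nbrs_irr[OF s] by (auto simp: doubleton_eq_iff)
    show "\<And>x. x \<in> nbrs H v \<Longrightarrow> {v, x} \<in> {e \<in> snd H. v \<in> e}" by (auto simp: nbrs_def)
    fix e assume e: "e \<in> {e \<in> snd H. v \<in> e}"
    then obtain a b where ab: "e = {a, b}" "a \<noteq> b" "a \<in> fst H" "b \<in> fst H"
      using sg_edge[OF s] by blast
    show "\<exists>x\<in>nbrs H v. e = {v, x}"
    proof (cases "v = a")
      case True then show ?thesis using e ab by (auto simp: nbrs_def)
    next
      case False then have "v = b" using e ab by auto
      then show ?thesis using e ab by (intro bexI[of _ a]) (auto simp: nbrs_def insert_commute)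
    qed
  qed
  then show ?thesis unfolding Defs.degree_def by (simp add: bij_betw_same_card)
qed

lemma swap_sum:
  assumes s: "simple_graph H"
  shows "(\<Sum>v\<in>fst H. \<Sum>w\<in>nbrs H v. f v w) = (\<Sum>v\<in>fst H. \<Sum>w\<in>nbrs H v. f w v)"
proof -
  define P where "P = Sigma (fst H) (nbrs H)"
  have fP: "finite P" unfolding P_def using s by (simp add: nbrs_fin sg_finV)
  have bij: "bij_betw prod.swap P P"
    unfolding P_def by (rule bij_betwI[where g=prod.swap]) (auto intro: nbrs_sym dest: subsetD[OF nbrs_sub])
  have "(\<Sum>v\<in>fst H. \<Sum>w\<in>nbrs H v. f v w) = (\<Sum>(v,w)\<in>P. f v w)"
    unfolding P_def by (simp add: sum.Sigma nbrs_fin[OF s] sg_finV[OF s])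
  also have "\<dots> = (\<Sum>(v,w)\<in>P. f w v)"
    using sum.reindex_bij_betw[OF bij, of "\<lambda>(v,w). f v w"] by (simp add: case_prod_unfold)
  also have "\<dots> = (\<Sum>v\<in>fst H. \<Sum>w\<in>nbrs H v. f w v)"
    unfolding P_def by (simp add: sum.Sigma nbrs_fin[OF s] sg_finV[OF s])
  finally show ?thesis .
qed

lemma edge_sum:
  assumes s: "simple_graph H"
  fixes h :: "'v set \<Rightarrow> real"
  shows "(\<Sum>v\<in>fst H. \<Sum>w\<in>nbrs H v. h {v, w}) = 2 * (\<Sum>e\<in>snd H. h e)"
proof -
  define P where "P = Sigma (fst H) (nbrs H)"
  have fP: "finite P" unfolding P_def using s by (simp add: nbrs_fin sg_finV)
  have img: "(\<lambda>(v,w). {v,w}) ` P \<subseteq> snd H" unfolding P_def nbrs_def by auto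
  have "(\<Sum>v\<in>fst H. \<Sum>w\<in>nbrs H v. h {v, w}) = (\<Sum>(v,w)\<in>P. h {v,w})"
    unfolding P_def by (simp add: sum.Sigma nbrs_fin[OF s] sg_finV[OF s])
  also have "\<dots> = (\<Sum>e\<in>snd H. \<Sum>p\<in>{p \<in> P. (\<lambda>(v,w). {v,w}) p = e}. (\<lambda>(v,w). h {v,w}) p)"
    using sum.group[OF fP sg_finE[OF s] img, of "\<lambda>(v,w). h {v,w}"] by simp
  also have "\<dots> = (\<Sum>e\<in>snd H. 2 * h e)"
  proof (rule sum.cong[OF refl])
    fix e assume e: "e \<in> snd H"
    then obtain a b where ab: "e = {a, b}" "a \<noteq> b" "a \<in> fst H" "b \<in> fst H"
      using sg_edge[OF s] by blast
    have "{p \<in> P. (\<lambda>(v,w). {v,w}) p = e} = {(a,b),(b,a)}"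
      using ab e unfolding P_def nbrs_def by (auto simp: doubleton_eq_iff insert_commute)
    moreover have "\<And>p. p \<in> {(a,b),(b,a)} \<Longrightarrow> (\<lambda>(v,w). h {v,w}) p = h e"
      using ab by (auto simp: insert_commute)
    ultimately show "(\<Sum>p\<in>{p \<in> P. (\<lambda>(v,w). {v,w}) p = e}. (\<lambda>(v,w). h {v,w}) p) = 2 * h e"
      using ab by simp
  qed
  finally show ?thesis by (simp add: sum_distrib_left)
qed

lemma deg_sum:
  assumes s: "simple_graph H"
  shows "(\<Sum>v\<in>fst H. real (Defs.degree H v) * f v) = (\<Sum>v\<in>fst H. \<Sum>w\<in>nbrs H v. f v)"
  by (rule sum.cong[OF refl]) (simp add: degree_nbrs[OF s])

lemma lap_sum0:
  assumes s: "simple_graph H"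
  shows "(\<Sum>v\<in>fst H. lap H x v) = 0"
proof -
  have "(\<Sum>v\<in>fst H. lap H x v) = (\<Sum>v\<in>fst H. \<Sum>w\<in>nbrs H v. x v) - (\<Sum>v\<in>fst H. \<Sum>w\<in>nbrs H v. x w)"
    unfolding lap_def by (simp add: sum_subtractf)
  also have "\<dots> = 0" using swap_sum[OF s, of "\<lambda>v w. x v"] by simp
  finally show ?thesis .
qed

lemma harmonic_const:
  assumes s: "simple_graph H" and c: "connected_graph H"
    and h: "\<forall>v\<in>fst H. lap H x v = 0"
    and u: "u \<in> fst H" and v: "v \<in> fst H"
  shows "x u = x v"
proof -
  have fin: "finite (x ` fst H)" using sg_finV[OF s] by simp
  have ne: "x ` fst H \<noteq> {}" using u by auto
  define M where "M = Max (x ` fst H)"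
  have "M \<in> x ` fst H" using Max_in[OF fin ne] M_def by simp
  then obtain v0 where v0: "v0 \<in> fst H" "x v0 = M" by force
  have le: "\<And>w. w \<in> fst H \<Longrightarrow> x w \<le> M" unfolding M_def using fin by (simp add: Max_ge)
  have hprop: "\<And>a b. adj H a b \<Longrightarrow> x a = M \<Longrightarrow> x b = M"
  proof -
    fix a b assume ab: "adj H a b" and xa: "x a = M"
    have abE: "{a, b} \<in> snd H" using ab by (simp add: adj_def)
    have aV: "a \<in> fst H" using sg_edge_sub[OF s abE, of a] by simp
    have bV: "b \<in> fst H" using sg_edge_sub[OF s abE, of b] by simp
    have bn: "b \<in> nbrs H a" using ab bV by (auto simp: adj_def nbrs_def)
    have z: "(\<Sum>w\<in>nbrs H a. x a - x w) = 0" using h aV by (simp add: lap_def)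
    have nn: "\<And>w. w \<in> nbrs H a \<Longrightarrow> 0 \<le> x a - x w"
    proof -
      fix w assume "w \<in> nbrs H a"
      then have "w \<in> fst H" by (simp add: nbrs_def)
      then show "0 \<le> x a - x w" using le xa by simp
    qed
    have "\<forall>w\<in>nbrs H a. x a - x w = 0"
      using sum_nonneg_eq_0_iff[OF nbrs_fin[OF s, of a] nn] z by simp
    then have "x a - x b = 0" using bn by blast
    then show "x b = M" using xa by simp
  qed
  have all: "\<And>w. (adj H)\<^sup>*\<^sup>* v0 w \<Longrightarrow> x w = M"
  proof -
    fix w assume "(adj H)\<^sup>*\<^sup>* v0 w"
    then show "x w = M"
    proof (induction rule: rtranclp_induct)
      case base then show ?case using v0 by simp
    next
      case (step y z) then show ?case using hprop by blast
    qed
  qed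
  have "(adj H)\<^sup>*\<^sup>* v0 u" "(adj H)\<^sup>*\<^sup>* v0 v" using c u v v0(1) by (auto simp: connected_graph_def)
  then have "x u = M" "x v = M" using all by blast+
  then show ?thesis by simp
qed

lemma lap_diff: "lap H (\<lambda>w. x w - y w) v = lap H x v - lap H y v"
proof -
  have "lap H (\<lambda>w. x w - y w) v = (\<Sum>w\<in>nbrs H v. (x v - x w) - (y v - y w))"
    unfolding lap_def by (rule sum.cong) auto
  then show ?thesis unfolding lap_def by (simp add: sum_subtractf)
qed

lemma potential_exists:
  assumes s: "simple_graph H" and c: "connected_graph H" and t: "t \<in> fst H"
    and b0: "(\<Sum>w\<in>fst H. b w) = 0"
  shows "\<exists>x. \<forall>v\<in>fst H. lap H x v = b v"
proof -
  define K where "K v w = (if v = w then real (card (nbrs H v)) else 0)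
      - (if w \<in> nbrs H v then 1 else 0) + (if v = t \<and> w = t then 1 else 0)" for v w
  have Ks: "(\<Sum>w\<in>fst H. K v w * x w) = lap H x v + (if v = t then x t else 0)"
    if v: "v \<in> fst H" for v x
  proof -
    have fV: "finite (fst H)" using sg_finV[OF s] .
    have "(\<Sum>w\<in>fst H. K v w * x w) = (\<Sum>w\<in>fst H. (if v = w then real (card (nbrs H v)) * x w else 0))
       - (\<Sum>w\<in>fst H. (if w \<in> nbrs H v then x w else 0)) + (\<Sum>w\<in>fst H. (if v = t \<and> w = t then x w else 0))"
    proof -
      have "(\<Sum>w\<in>fst H. K v w * x w) = (\<Sum>w\<in>fst H. (if v = w then real (card (nbrs H v)) * x w else 0)
       - (if w \<in> nbrs H v then x w else 0) + (if v = t \<and> w = t then x w else 0))"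
        by (rule sum.cong) (simp_all add: K_def algebra_simps)
      then show ?thesis by (simp add: sum_subtractf sum.distrib)
    qed
    also have "(\<Sum>w\<in>fst H. (if v = w then real (card (nbrs H v)) * x w else 0)) = real (card (nbrs H v)) * x v"
      using fV v by (simp add: sum.delta)
    also have "(\<Sum>w\<in>fst H. (if w \<in> nbrs H v then x w else 0)) = (\<Sum>w\<in>nbrs H v. x w)"
      using fV nbrs_sub[of H v] by (simp add: sum.inter_restrict[symmetric] Int_absorb1 Int_commute)
    also have "(\<Sum>w\<in>fst H. (if v = t \<and> w = t then x w else 0)) = (if v = t then x t else 0)"
      using fV t by (simp add: sum.delta)
    finally show ?thesis unfolding lap_def by (simp add: sum_subtractf)
  qed
  have inj: "\<forall>v\<in>fst H. x v = 0" if h: "\<forall>v\<in>fst H. (\<Sum>w\<in>fst H. K v w * x w) = 0" for x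
  proof -
    have e: "\<forall>v\<in>fst H. lap H x v + (if v = t then x t else 0) = 0" using h Ks by simp
    have "0 = (\<Sum>v\<in>fst H. lap H x v + (if v = t then x t else 0))" using e by simp
    also have "\<dots> = x t" using lap_sum0[OF s] t sg_finV[OF s] by (simp add: sum.distrib sum.delta)
    finally have xt: "x t = 0" by simp
    have "lap H x v = 0" if "v \<in> fst H" for v using e[rule_format, OF that] xt by (cases "v = t") auto
    then have "\<forall>v\<in>fst H. lap H x v = 0" by blast
    from harmonic_const[OF s c this _ t] xt show ?thesis by simp
  qed
  obtain x where x: "\<forall>v\<in>fst H. (\<Sum>w\<in>fst H. K v w * x w) = b v"
    using fredholm[OF sg_finV[OF s] inj] by blast
  have e: "\<forall>v\<in>fst H. lap H x v + (if v = t then x t else 0) = b v" using x Ks by simp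
  have "0 = (\<Sum>v\<in>fst H. lap H x v + (if v = t then x t else 0))" using e b0 by simp
  also have "\<dots> = x t" using lap_sum0[OF s] t sg_finV[OF s] by (simp add: sum.distrib sum.delta)
  finally have xt: "x t = 0" by simp
  have "lap H x v = b v" if "v \<in> fst H" for v using e[rule_format, OF that] xt by (cases "v = t") auto
  then show ?thesis by blast
qed

lemma resistance_eq:
  assumes s: "simple_graph H" and c: "connected_graph H" and st: "s \<in> fst H" "t \<in> fst H"
    and x: "\<forall>v\<in>fst H. lap H x v = (if v = s then 1 else 0) - (if v = t then 1 else 0)"
  shows "resistance H s t = x s - x t"
  unfolding resistance_def
proof (rule the_equality)
  show "\<exists>x'. (\<forall>v\<in>fst H. (\<Sum>w\<in>{w \<in> fst H. {v, w} \<in> snd H}. x' v - x' w) =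
          (if v = s then 1 else 0) - (if v = t then 1 else 0)) \<and> x s - x t = x' s - x' t"
    using x by (intro exI[of _ x]) (simp add: lap_def nbrs_def)
  fix r :: real assume "\<exists>x'. (\<forall>v\<in>fst H. (\<Sum>w\<in>{w \<in> fst H. {v, w} \<in> snd H}. x' v - x' w) =
          (if v = s then 1 else 0) - (if v = t then 1 else 0)) \<and> r = x' s - x' t"
  then obtain y where y: "\<forall>v\<in>fst H. lap H y v = (if v = s then 1 else 0) - (if v = t then 1 else 0)"
    and r: "r = y s - y t" by (auto simp: lap_def nbrs_def)
  have "\<forall>v\<in>fst H. lap H (\<lambda>w. y w - x w) v = 0" using x y by (simp add: lap_diff)
  then have "y s - x s = y t - x t" using harmonic_const[OF s c _ st] by blast
  then show "r = x s - x t" using r by simp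
qed


lemma deg_total:
  assumes s: "simple_graph H"
  shows "(\<Sum>v\<in>fst H. real (Defs.degree H v)) = 2 * real (card (snd H))"
proof -
  have "(\<Sum>v\<in>fst H. real (Defs.degree H v)) = (\<Sum>v\<in>fst H. \<Sum>w\<in>nbrs H v. (1::real))"
    using deg_sum[OF s, of "\<lambda>v. 1"] by simp
  also have "\<dots> = 2 * (\<Sum>e\<in>snd H. (1::real))" using edge_sum[OF s, of "\<lambda>e. 1"] by simp
  finally show ?thesis by simp
qed

lemma res_phi:
  assumes s: "simple_graph H" and c: "connected_graph H" and r: "r \<in> fst H"
    and phi: "\<forall>u\<in>fst H. \<forall>v\<in>fst H. lap H (\<phi> u) v = (if v = u then 1 else 0) - (if v = r then 1 else 0)"
    and ij: "i \<in> fst H" "j \<in> fst H"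
  shows "resistance H i j = \<phi> i i - \<phi> j i - \<phi> i j + \<phi> j j"
proof -
  have "\<forall>v\<in>fst H. lap H (\<lambda>w. \<phi> i w - \<phi> j w) v = (if v = i then 1 else 0) - (if v = j then 1 else 0)"
    using phi ij by (simp add: lap_diff)
  from resistance_eq[OF s c ij this] show ?thesis by simp
qed

lemma rstar_formula:
  assumes s: "simple_graph H" and c: "connected_graph H" and r: "r \<in> fst H"
    and phi: "\<forall>u\<in>fst H. \<forall>v\<in>fst H. lap H (\<phi> u) v = (if v = u then 1 else 0) - (if v = r then 1 else 0)"
  shows "Rstar H = 2 * real (card (snd H)) * (\<Sum>v\<in>fst H. real (Defs.degree H v) * \<phi> v v)
     - (\<Sum>u\<in>fst H. \<Sum>w\<in>fst H. real (Defs.degree H u) * real (Defs.degree H w) * \<phi> u w)"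
proof -
  let ?V = "fst H"
  let ?d = "\<lambda>v. real (Defs.degree H v)"
  let ?T = "\<lambda>i j. ?d i * ?d j * (\<phi> i i - \<phi> j i - \<phi> i j + \<phi> j j)"
  define A where "A = (\<Sum>v\<in>?V. ?d v * \<phi> v v)"
  define B where "B = (\<Sum>u\<in>?V. \<Sum>w\<in>?V. ?d u * ?d w * \<phi> u w)"
  have fV: "finite ?V" using sg_finV[OF s] .
  let ?Off = "{(i, j). i \<in> ?V \<and> j \<in> ?V \<and> i \<noteq> j}"
  have "(\<Sum>(i, j)\<in>?Off. ?d i * ?d j * resistance H i j) = (\<Sum>(i, j)\<in>?Off. ?T i j)"
    by (rule sum.cong[OF refl]) (auto simp: res_phi[OF s c r phi])
  also have "\<dots> = (\<Sum>(i, j)\<in>?V \<times> ?V. ?T i j)"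
    by (rule sum.mono_neutral_left) (use fV in auto)
  also have "\<dots> = (\<Sum>i\<in>?V. \<Sum>j\<in>?V. ?T i j)" by (simp add: sum.cartesian_product)
  also have "\<dots> = (\<Sum>i\<in>?V. \<Sum>j\<in>?V. ?d j * (?d i * \<phi> i i)) - (\<Sum>i\<in>?V. \<Sum>j\<in>?V. ?d j * ?d i * \<phi> j i)
      - (\<Sum>i\<in>?V. \<Sum>j\<in>?V. ?d i * ?d j * \<phi> i j) + (\<Sum>i\<in>?V. \<Sum>j\<in>?V. ?d i * (?d j * \<phi> j j))"
  proof -
    have e: "?T i j = ?d j * (?d i * \<phi> i i) - ?d j * ?d i * \<phi> j i - ?d i * ?d j * \<phi> i j + ?d i * (?d j * \<phi> j j)" for i j
      by (simp add: right_diff_distrib distrib_left mult.commute mult.left_commute)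
    show ?thesis unfolding e by (simp only: sum_subtractf sum.distrib)
  qed
  also have "(\<Sum>i\<in>?V. \<Sum>j\<in>?V. ?d j * (?d i * \<phi> i i)) = (\<Sum>j\<in>?V. ?d j) * A"
    unfolding A_def by (simp add: sum_distrib_left[symmetric] sum_distrib_right[symmetric])
  also have "(\<Sum>i\<in>?V. \<Sum>j\<in>?V. ?d i * (?d j * \<phi> j j)) = (\<Sum>j\<in>?V. ?d j) * A"
    unfolding A_def by (simp add: sum_distrib_left[symmetric] sum_distrib_right[symmetric])
  also have "(\<Sum>i\<in>?V. \<Sum>j\<in>?V. ?d j * ?d i * \<phi> j i) = B"
    unfolding B_def by (rule sum.swap)
  also have "(\<Sum>i\<in>?V. \<Sum>j\<in>?V. ?d i * ?d j * \<phi> i j) = B" unfolding B_def ..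
  finally have "(\<Sum>(i, j)\<in>?Off. ?d i * ?d j * resistance H i j) = 2 * (2 * real (card (snd H))) * A - 2 * B"
    using deg_total[OF s] by simp
  then show ?thesis unfolding Rstar_def A_def B_def by simp
qed

lemma foster:
  assumes s: "simple_graph H" and r: "r \<in> fst H"
    and phi: "\<forall>u\<in>fst H. \<forall>v\<in>fst H. lap H (\<phi> u) v = (if v = u then 1 else 0) - (if v = r then 1 else 0)"
  shows "(\<Sum>v\<in>fst H. \<Sum>w\<in>nbrs H v. \<phi> v w)
     = (\<Sum>v\<in>fst H. real (Defs.degree H v) * \<phi> v v) - (real (card (fst H)) - 1)"
proof -
  have fV: "finite (fst H)" using sg_finV[OF s] .
  have "(\<Sum>v\<in>fst H. lap H (\<phi> v) v) = (\<Sum>v\<in>fst H. 1 - (if v = r then 1 else 0))"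
    using phi by simp
  also have "\<dots> = real (card (fst H)) - 1" using fV r by (simp add: sum_subtractf)
  finally have 1: "(\<Sum>v\<in>fst H. lap H (\<phi> v) v) = real (card (fst H)) - 1" .
  have "(\<Sum>v\<in>fst H. lap H (\<phi> v) v) = (\<Sum>v\<in>fst H. real (Defs.degree H v) * \<phi> v v)
        - (\<Sum>v\<in>fst H. \<Sum>w\<in>nbrs H v. \<phi> v w)"
    unfolding lap_def by (simp add: sum_subtractf degree_nbrs[OF s] mult.commute)
  with 1 show ?thesis by simp
qed




primrec rank :: "'a sv \<Rightarrow> nat" where
  "rank (Orig a) = 0"
| "rank (Mid p) = Suc (Max (set_uprod (map_uprod rank p)))"

definition mu :: "'a sv set \<Rightarrow> 'a sv" where "mu e = Mid (to_upair e)"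
definition eps :: "'a sv \<Rightarrow> 'a sv set" where
  "eps u = (case u of Mid p \<Rightarrow> set_uprod p | Orig a \<Rightarrow> {})"

lemma to_upair_eq: "to_upair {a, b} = Upair a b"
proof -
  have u: "p = Upair a b" if "set_uprod p = {a,b}" for p
    using that by (cases p) (auto simp: doubleton_eq_iff)
  show ?thesis unfolding to_upair_def by (rule the_equality) (simp, rule u)
qed

lemma eps_mu: "eps (mu {a,b}) = {a,b}" by (simp add: eps_def mu_def to_upair_eq)

lemma rank_mu: "rank (mu {a,b}) = Suc (max (rank a) (rank b))"
  by (simp add: mu_def to_upair_eq)

lemma edge_other:
  assumes s: "simple_graph H" and e: "e \<in> snd H" and v: "v \<in> e"
  shows "\<exists>w. e = {v, w} \<and> w \<noteq> v \<and> w \<in> fst H \<and> w \<in> nbrs H v"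
proof -
  obtain a b where ab: "e = {a, b}" "a \<noteq> b" "a \<in> fst H" "b \<in> fst H" using sg_edge[OF s e] by blast
  show ?thesis
  proof (cases "v = a")
    case True then show ?thesis using ab e by (intro exI[of _ b]) (auto simp: nbrs_def)
  next
    case False then have "v = b" using v ab by auto
    then show ?thesis using ab e False by (intro exI[of _ a]) (auto simp: nbrs_def insert_commute)
  qed
qed

lemma subdivision_eq: "subdivision H = (fst H \<union> mu ` snd H, {{u, mu e} | u e. e \<in> snd H \<and> u \<in> e})"
  by (simp add: subdivision_def mu_def)

locale subd =
  fixes H :: "'a sv graph"
  assumes s: "simple_graph H" and fr: "\<forall>e\<in>snd H. mu e \<notin> fst H"
begin

lemma eps_muE: "e \<in> snd H \<Longrightarrow> eps (mu e) = e"
  using sg_edge[OF s] eps_mu by blast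

lemma mu_inj: "inj_on mu (snd H)"
  by (rule inj_onI) (metis eps_muE)

lemma fstS: "fst (subdivision H) = fst H \<union> mu ` snd H" by (simp add: subdivision_eq)
lemma sndS: "snd (subdivision H) = {{u, mu e} | u e. e \<in> snd H \<and> u \<in> e}" by (simp add: subdivision_eq)

lemma inS: "{x, y} \<in> snd (subdivision H) \<longleftrightarrow> (\<exists>u e. e \<in> snd H \<and> u \<in> e \<and> {x, y} = {u, mu e})"
  by (auto simp: sndS)

lemma nbrsS_V:
  assumes v: "v \<in> fst H"
  shows "nbrs (subdivision H) v = (\<lambda>w. mu {v, w}) ` nbrs H v"
proof (rule Set.set_eqI, rule iffI)
  fix x assume "x \<in> nbrs (subdivision H) v"
  then obtain u e where ue: "e \<in> snd H" "u \<in> e" "{v, x} = {u, mu e}"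
    unfolding nbrs_def inS by blast
  have "v \<noteq> mu e" using fr ue(1) v by blast
  then have vu: "v = u" "x = mu e" using ue(3) by (auto simp: doubleton_eq_iff)
  obtain w where w: "e = {v, w}" "w \<in> nbrs H v" using edge_other[OF s ue(1)] ue(2) vu by blast
  show "x \<in> (\<lambda>w. mu {v, w}) ` nbrs H v" using w vu by auto
next
  fix x assume "x \<in> (\<lambda>w. mu {v, w}) ` nbrs H v"
  then obtain w where w: "w \<in> nbrs H v" "x = mu {v, w}" by blast
  have E: "{v, w} \<in> snd H" using w by (simp add: nbrs_def)
  then have "{v, x} \<in> snd (subdivision H)" unfolding inS using w by blast
  moreover have "x \<in> fst (subdivision H)" using E w by (simp add: fstS)
  ultimately show "x \<in> nbrs (subdivision H) v" by (simp add: nbrs_def)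
qed

lemma nbrsS_M:
  assumes e: "e \<in> snd H"
  shows "nbrs (subdivision H) (mu e) = e"
proof (rule Set.set_eqI, rule iffI)
  fix x assume "x \<in> nbrs (subdivision H) (mu e)"
  then obtain u e' where ue: "e' \<in> snd H" "u \<in> e'" "{mu e, x} = {u, mu e'}"
    unfolding nbrs_def inS by blast
  have "u \<in> fst H" using sg_edge_sub[OF s ue(1,2)] .
  then have "mu e \<noteq> u" using fr e by blast
  then have "mu e = mu e'" "x = u" using ue(3) by (auto simp: doubleton_eq_iff)
  then have "e = e'" using mu_inj e ue(1) by (simp add: inj_on_def)
  then show "x \<in> e" using ue \<open>x = u\<close> by simp
next
  fix x assume x: "x \<in> e"
  then have "{x, mu e} \<in> snd (subdivision H)" unfolding inS using e by blast
  then have "{mu e, x} \<in> snd (subdivision H)" by (simp add: insert_commute)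
  moreover have "x \<in> fst (subdivision H)" using sg_edge_sub[OF s e x] by (simp add: fstS)
  ultimately show "x \<in> nbrs (subdivision H) (mu e)" by (simp add: nbrs_def)
qed

lemma simpleS: "simple_graph (subdivision H)"
  unfolding simple_graph_def
proof (intro conjI ballI)
  show "finite (fst (subdivision H))" using sg_finV[OF s] sg_finE[OF s] by (simp add: fstS)
  fix f assume "f \<in> snd (subdivision H)"
  then obtain u e where ue: "e \<in> snd H" "u \<in> e" "f = {u, mu e}" by (auto simp: sndS)
  have uV: "u \<in> fst H" using sg_edge_sub[OF s ue(1,2)] .
  then have "u \<noteq> mu e" using fr ue(1) by blast
  then show "\<exists>a b. f = {a, b} \<and> a \<noteq> b \<and> a \<in> fst (subdivision H) \<and> b \<in> fst (subdivision H)"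
    using ue uV by (intro exI[of _ u] exI[of _ "mu e"]) (auto simp: fstS)
qed

lemma inj_nbrs: "inj_on (\<lambda>w. mu {v, w}) (nbrs H v)"
proof (rule inj_onI)
  fix w w' assume w: "w \<in> nbrs H v" "w' \<in> nbrs H v" "mu {v, w} = mu {v, w'}"
  have "{v, w} = {v, w'}" using w mu_inj by (auto simp: inj_on_def nbrs_def)
  then show "w = w'" using w nbrs_irr[OF s, of v] by (auto simp: doubleton_eq_iff)
qed

lemma lapS_V: "v \<in> fst H \<Longrightarrow> lap (subdivision H) y v = (\<Sum>w\<in>nbrs H v. y v - y (mu {v, w}))"
  unfolding lap_def nbrsS_V by (simp add: sum.reindex[OF inj_nbrs])

lemma lapS_M: "e \<in> snd H \<Longrightarrow> lap (subdivision H) y (mu e) = (\<Sum>a\<in>e. y (mu e) - y a)"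
  unfolding lap_def by (simp add: nbrsS_M)

lemma degS_V: "v \<in> fst H \<Longrightarrow> Defs.degree (subdivision H) v = Defs.degree H v"
  using degree_nbrs[OF simpleS, of v] degree_nbrs[OF s, of v]
  by (simp add: fstS nbrsS_V card_image[OF inj_nbrs])

lemma card_edge: "e \<in> snd H \<Longrightarrow> card e = 2"
  using sg_edge[OF s] by fastforce

lemma degS_M: "e \<in> snd H \<Longrightarrow> Defs.degree (subdivision H) (mu e) = 2"
  using degree_nbrs[OF simpleS, of "mu e"] by (simp add: fstS nbrsS_M card_edge)

lemma cardVS: "card (fst (subdivision H)) = card (fst H) + card (snd H)"
proof -
  have "card (fst H \<union> mu ` snd H) = card (fst H) + card (mu ` snd H)"
    using fr sg_finV[OF s] sg_finE[OF s] by (intro card_Un_disjoint) auto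
  then show ?thesis by (simp add: fstS card_image[OF mu_inj])
qed

lemma cardES: "card (snd (subdivision H)) = 2 * card (snd H)"
proof -
  have bij: "bij_betw (\<lambda>(e, u). {u, mu e}) (Sigma (snd H) (\<lambda>e. e)) (snd (subdivision H))"
  proof (rule bij_betwI')
    fix p q assume p: "p \<in> Sigma (snd H) (\<lambda>e. e)" and q: "q \<in> Sigma (snd H) (\<lambda>e. e)"
    obtain e u where pe: "p = (e, u)" "e \<in> snd H" "u \<in> e" using p by auto
    obtain e' u' where qe: "q = (e', u')" "e' \<in> snd H" "u' \<in> e'" using q by auto
    have uV: "u \<in> fst H" "u' \<in> fst H" using sg_edge_sub[OF s] pe qe by blast+
    have nV: "mu e \<notin> fst H" "mu e' \<notin> fst H" using fr pe qe by blast+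
    show "((\<lambda>(e, u). {u, mu e}) p = (\<lambda>(e, u). {u, mu e}) q) = (p = q)"
    proof
      assume "(\<lambda>(e, u). {u, mu e}) p = (\<lambda>(e, u). {u, mu e}) q"
      then have "{u, mu e} = {u', mu e'}" using pe qe by simp
      then have "u = u'" "mu e = mu e'" using uV nV by (auto simp: doubleton_eq_iff)
      then show "p = q" using pe qe mu_inj by (auto simp: inj_on_def)
    qed simp
  next
    fix p assume "p \<in> Sigma (snd H) (\<lambda>e. e)"
    then show "(\<lambda>(e, u). {u, mu e}) p \<in> snd (subdivision H)" by (auto simp: sndS)
  next
    fix f assume "f \<in> snd (subdivision H)"
    then obtain u e where "e \<in> snd H" "u \<in> e" "f = {u, mu e}" by (auto simp: sndS)
    then show "\<exists>p\<in>Sigma (snd H) (\<lambda>e. e). f = (\<lambda>(e, u). {u, mu e}) p" by auto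
  qed
  have "card (Sigma (snd H) (\<lambda>e. e)) = (\<Sum>e\<in>snd H. card e)"
    using sg_finE[OF s] sg_edge[OF s] by (intro card_SigmaI) auto
  also have "\<dots> = (\<Sum>e\<in>snd H. 2)" using card_edge by simp
  finally show ?thesis using bij_betw_same_card[OF bij] by simp
qed

lemma adjS1: "e \<in> snd H \<Longrightarrow> u \<in> e \<Longrightarrow> adj (subdivision H) u (mu e)"
  unfolding adj_def inS by blast
lemma adjS2: "e \<in> snd H \<Longrightarrow> u \<in> e \<Longrightarrow> adj (subdivision H) (mu e) u"
  unfolding adj_def using inS by (metis insert_commute)

lemma connS:
  assumes c: "connected_graph H"
  shows "connected_graph (subdivision H)"
proof -
  let ?R = "(adj (subdivision H))\<^sup>*\<^sup>*"
  have lift: "?R a b" if "(adj H)\<^sup>*\<^sup>* a b" for a b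
    using that
  proof (induction rule: rtranclp_induct)
    case base then show ?case by simp
  next
    case (step y z)
    have E: "{y, z} \<in> snd H" using step(2) by (simp add: adj_def)
    have "adj (subdivision H) y (mu {y, z})" using adjS1[OF E] by simp
    moreover have "adj (subdivision H) (mu {y, z}) z" using adjS2[OF E] by simp
    ultimately show ?case using step(3)
      by (meson rtranclp.rtrancl_into_rtrancl)
  qed
  have toV: "\<exists>a\<in>fst H. ?R x a \<and> ?R a x" if x: "x \<in> fst (subdivision H)" for x
  proof (cases "x \<in> fst H")
    case True then show ?thesis by blast
  next
    case False
    then obtain e where e: "e \<in> snd H" "x = mu e" using x by (auto simp: fstS)
    obtain a b where ab: "e = {a, b}" "a \<in> fst H" using sg_edge[OF s e(1)] by blast
    have "adj (subdivision H) x a" "adj (subdivision H) a x"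
      using adjS1[OF e(1), of a] adjS2[OF e(1), of a] ab e by auto
    then show ?thesis using ab by blast
  qed
  show ?thesis unfolding connected_graph_def
  proof (intro conjI ballI)
    show "fst (subdivision H) \<noteq> {}" using c by (auto simp: connected_graph_def fstS)
    fix u v assume u: "u \<in> fst (subdivision H)" and v: "v \<in> fst (subdivision H)"
    obtain a where a: "a \<in> fst H" "?R u a" using toV[OF u] by blast
    obtain b where b: "b \<in> fst H" "?R b v" using toV[OF v] by blast
    have "(adj H)\<^sup>*\<^sup>* a b" using c a b by (simp add: connected_graph_def)
    then have "?R a b" by (rule lift)
    then show "?R u v" using a b by (meson rtranclp_trans)
  qed
qed

end


lemma lap_add: "lap G (\<lambda>w. x w + y w) v = lap G x v + lap G y v"
proof -
  have "lap G (\<lambda>w. x w + y w) v = (\<Sum>w\<in>nbrs G v. (x v - x w) + (y v - y w))"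
    unfolding lap_def by (rule sum.cong) auto
  then show ?thesis unfolding lap_def by (simp add: sum.distrib)
qed

lemma lap_scale: "lap G (\<lambda>w. c * x w) v = c * lap G x v"
  unfolding lap_def by (simp add: sum_distrib_left right_diff_distrib)

lemma lap_sum: "lap G (\<lambda>w. \<Sum>a\<in>A. f a w) v = (\<Sum>a\<in>A. lap G (f a) v)"
proof -
  have "lap G (\<lambda>w. \<Sum>a\<in>A. f a w) v = (\<Sum>w\<in>nbrs G v. \<Sum>a\<in>A. f a v - f a w)"
    unfolding lap_def by (simp add: sum_subtractf)
  also have "\<dots> = (\<Sum>a\<in>A. lap G (f a) v)" unfolding lap_def by (rule sum.swap)
  finally show ?thesis .
qed

lemma inc_sum:
  assumes s: "simple_graph H"
  shows "(\<Sum>e\<in>snd H. \<Sum>a\<in>e. f a) = (\<Sum>v\<in>fst H. real (Defs.degree H v) * f v)"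
proof -
  have "2 * (\<Sum>e\<in>snd H. \<Sum>a\<in>e. f a) = (\<Sum>v\<in>fst H. \<Sum>w\<in>nbrs H v. \<Sum>a\<in>{v, w}. f a)"
    using edge_sum[OF s, of "\<lambda>e. \<Sum>a\<in>e. f a"] by simp
  also have "\<dots> = (\<Sum>v\<in>fst H. \<Sum>w\<in>nbrs H v. f v + f w)"
  proof (intro sum.cong refl)
    fix v w assume "w \<in> nbrs H v"
    then have "v \<noteq> w" using nbrs_irr[OF s, of v] by blast
    then show "(\<Sum>a\<in>{v, w}. f a) = f v + f w" by simp
  qed
  also have "\<dots> = (\<Sum>v\<in>fst H. \<Sum>w\<in>nbrs H v. f v) + (\<Sum>v\<in>fst H. \<Sum>w\<in>nbrs H v. f w)"
    by (simp add: sum.distrib)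
  also have "(\<Sum>v\<in>fst H. \<Sum>w\<in>nbrs H v. f w) = (\<Sum>v\<in>fst H. \<Sum>w\<in>nbrs H v. f v)"
    using swap_sum[OF s, of "\<lambda>v w. f w"] by simp
  also have "(\<Sum>v\<in>fst H. \<Sum>w\<in>nbrs H v. f v) = (\<Sum>v\<in>fst H. real (Defs.degree H v) * f v)"
    using deg_sum[OF s, of f] by simp
  finally show ?thesis by simp
qed

context subd begin

definition lift :: "('a sv \<Rightarrow> real) \<Rightarrow> 'a sv \<Rightarrow> real" where
  "lift f w = (if w \<in> fst H then 2 * f w else (\<Sum>a\<in>eps w. f a))"

lemma lift_V: "v \<in> fst H \<Longrightarrow> lift f v = 2 * f v" by (simp add: lift_def)
lemma lift_mu: "e \<in> snd H \<Longrightarrow> lift f (mu e) = (\<Sum>a\<in>e. f a)"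
  using fr by (simp add: lift_def eps_muE)

lemma lift_sum: "lift (\<lambda>x. \<Sum>i\<in>I. f i x) w = (\<Sum>i\<in>I. lift (f i) w)"
proof (cases "w \<in> fst H")
  case True then show ?thesis by (simp add: lift_def sum_distrib_left)
next
  case False then show ?thesis unfolding lift_def by (simp add: sum.swap[of _ I])
qed
lemma lift_scale: "lift (\<lambda>x. c * f x) w = c * lift f w"
  by (cases "w \<in> fst H") (simp_all add: lift_def sum_distrib_left)

lemma lap_lift_V:
  assumes v: "v \<in> fst H"
  shows "lap (subdivision H) (lift f) v = lap H f v"
proof -
  have "lap (subdivision H) (lift f) v = (\<Sum>w\<in>nbrs H v. lift f v - lift f (mu {v, w}))"
    using lapS_V[OF v] .
  also have "\<dots> = (\<Sum>w\<in>nbrs H v. f v - f w)"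
  proof (rule sum.cong[OF refl])
    fix w assume w: "w \<in> nbrs H v"
    have E: "{v, w} \<in> snd H" using w by (simp add: nbrs_def)
    have "w \<noteq> v" using w nbrs_irr[OF s] by blast
    then show "lift f v - lift f (mu {v, w}) = f v - f w"
      using lift_mu[OF E] lift_V[OF v] by simp
  qed
  finally show ?thesis by (simp add: lap_def)
qed

lemma lap_lift_M:
  assumes e: "e \<in> snd H"
  shows "lap (subdivision H) (lift f) (mu e) = 0"
proof -
  have aV: "\<And>a. a \<in> e \<Longrightarrow> a \<in> fst H" using sg_edge_sub[OF s e] .
  have "lap (subdivision H) (lift f) (mu e) = (\<Sum>a\<in>e. (\<Sum>b\<in>e. f b) - 2 * f a)"
    unfolding lapS_M[OF e] by (rule sum.cong) (simp_all add: lift_mu[OF e] lift_V aV)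
  also have "\<dots> = real (card e) * (\<Sum>b\<in>e. f b) - 2 * (\<Sum>a\<in>e. f a)"
    by (simp add: sum_subtractf sum_distrib_left)
  also have "\<dots> = 0" using card_edge[OF e] by simp
  finally show ?thesis .
qed

definition psi :: "('a sv \<Rightarrow> 'a sv \<Rightarrow> real) \<Rightarrow> 'a sv \<Rightarrow> 'a sv \<Rightarrow> real" where
  "psi \<phi> u = (if u \<in> fst H then lift (\<phi> u)
      else (\<lambda>w. lift (\<lambda>x. (1/2) * (\<Sum>a\<in>eps u. \<phi> a x)) w + (if w = u then 1/2 else 0)))"

lemma lap_delta_V:
  assumes e0: "e0 \<in> snd H" and v: "v \<in> fst H"
  shows "lap (subdivision H) (\<lambda>w. if w = mu e0 then 1/2 else 0) v = - (if v \<in> e0 then 1/2 else 0)"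
proof -
  have vne: "v \<noteq> mu e0" using fr e0 v by blast
  have "lap (subdivision H) (\<lambda>w. if w = mu e0 then 1/2 else 0) v
      = - (\<Sum>x\<in>nbrs (subdivision H) v. (if x = mu e0 then 1/2 else 0))"
    unfolding lap_def using vne by (simp add: sum_negf)
  also have "\<dots> = - (if mu e0 \<in> nbrs (subdivision H) v then 1/2 else 0)"
    using nbrs_fin[OF simpleS] by (simp add: sum.delta')
  also have "mu e0 \<in> nbrs (subdivision H) v \<longleftrightarrow> v \<in> e0"
  proof
    assume "mu e0 \<in> nbrs (subdivision H) v"
    moreover have "v \<in> fst (subdivision H)" using v by (simp add: fstS)
    ultimately have "v \<in> nbrs (subdivision H) (mu e0)" by (rule nbrs_sym)
    then show "v \<in> e0" using nbrsS_M[OF e0] by simp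
  next
    assume "v \<in> e0"
    then have "v \<in> nbrs (subdivision H) (mu e0)" using nbrsS_M[OF e0] by simp
    moreover have "mu e0 \<in> fst (subdivision H)" using e0 by (simp add: fstS)
    ultimately show "mu e0 \<in> nbrs (subdivision H) v" by (rule nbrs_sym)
  qed
  finally show ?thesis .
qed

lemma lap_delta_M:
  assumes e0: "e0 \<in> snd H" and e: "e \<in> snd H"
  shows "lap (subdivision H) (\<lambda>w. if w = mu e0 then 1/2 else 0) (mu e) = (if e = e0 then 1 else 0)"
proof -
  have aV: "\<And>a. a \<in> e \<Longrightarrow> a \<noteq> mu e0" using sg_edge_sub[OF s e] fr e0 by blast
  have "lap (subdivision H) (\<lambda>w. if w = mu e0 then 1/2 else 0) (mu e)
       = (\<Sum>a\<in>e. (if mu e = mu e0 then 1/2 else 0))"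
    unfolding lapS_M[OF e] by (rule sum.cong) (simp_all add: aV)
  also have "\<dots> = real (card e) * (if mu e = mu e0 then 1/2 else 0)" by simp
  also have "mu e = mu e0 \<longleftrightarrow> e = e0" using mu_inj e e0 by (auto simp: inj_on_def)
  finally show ?thesis using card_edge[OF e] by simp
qed

lemma psi_lap:
  assumes r: "r \<in> fst H"
    and phi: "\<forall>u\<in>fst H. \<forall>v\<in>fst H. lap H (\<phi> u) v = (if v = u then 1 else 0) - (if v = r then 1 else 0)"
    and u: "u \<in> fst (subdivision H)" and w: "w \<in> fst (subdivision H)"
  shows "lap (subdivision H) (psi \<phi> u) w = (if w = u then 1 else 0) - (if w = r then 1 else 0)"
proof (cases "u \<in> fst H")
  case True
  then have pu: "psi \<phi> u = lift (\<phi> u)" by (simp add: psi_def)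
  show ?thesis
  proof (cases "w \<in> fst H")
    case True then show ?thesis using pu lap_lift_V phi \<open>u \<in> fst H\<close> by simp
  next
    case False
    then obtain e where e: "e \<in> snd H" "w = mu e" using w by (auto simp: fstS)
    have "w \<noteq> u" "w \<noteq> r" using False \<open>u \<in> fst H\<close> r by auto
    then show ?thesis using pu lap_lift_M[OF e(1)] e by simp
  qed
next
  case False
  then obtain e0 where e0: "e0 \<in> snd H" "u = mu e0" using u by (auto simp: fstS)
  have eps: "eps u = e0" using eps_muE e0 by simp
  define g where "g = (\<lambda>x. (1/2) * (\<Sum>a\<in>e0. \<phi> a x))"
  have pu: "psi \<phi> u = (\<lambda>w. lift g w + (if w = mu e0 then 1/2 else 0))"
    using False eps e0 by (simp add: psi_def g_def)
  have lp: "lap (subdivision H) (psi \<phi> u) w = lap (subdivision H) (lift g) w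
      + lap (subdivision H) (\<lambda>w. if w = mu e0 then 1/2 else 0) w"
    unfolding pu by (rule lap_add)
  show ?thesis
  proof (cases "w \<in> fst H")
    case True
    have aV: "\<And>a. a \<in> e0 \<Longrightarrow> a \<in> fst H" using sg_edge_sub[OF s e0(1)] .
    have "lap H g w = (1/2) * (\<Sum>a\<in>e0. lap H (\<phi> a) w)"
      unfolding g_def lap_scale lap_sum ..
    also have "\<dots> = (1/2) * (\<Sum>a\<in>e0. (if w = a then 1 else 0) - (if w = r then 1 else 0))"
      using phi aV True by simp
    also have "\<dots> = (1/2) * ((if w \<in> e0 then 1 else 0) - 2 * (if w = r then 1 else 0))"
    proof -
      have fe: "finite e0" using card_edge[OF e0(1)] card.infinite by fastforce
      show ?thesis using card_edge[OF e0(1)] fe by (simp add: sum_subtractf sum.delta sum.delta')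
    qed
    finally have "lap H g w = (1/2) * ((if w \<in> e0 then 1 else 0) - 2 * (if w = r then 1 else 0))" .
    then have L: "lap H g w = (if w \<in> e0 then 1/2 else 0) - (if w = r then 1 else 0)"
      by (cases "w \<in> e0"; cases "w = r"; simp)
    have wu: "w \<noteq> u" using True e0 fr by blast
    have "lap (subdivision H) (psi \<phi> u) w = lap H g w - (if w \<in> e0 then 1/2 else 0)"
      using lp lap_lift_V[OF True] lap_delta_V[OF e0(1) True] by simp
    then show ?thesis using L wu by simp
  next
    case False
    then obtain e where e: "e \<in> snd H" "w = mu e" using w by (auto simp: fstS)
    have "w \<noteq> r" using False r by auto
    moreover have "(w = u) = (e = e0)" using e e0 mu_inj by (auto simp: inj_on_def)
    ultimately show ?thesis using lp lap_lift_M[OF e(1)] lap_delta_M[OF e0(1) e(1)] e by simp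
  qed
qed

lemma sumS: "(\<Sum>u\<in>fst (subdivision H). f u) = (\<Sum>v\<in>fst H. f v) + (\<Sum>e\<in>snd H. f (mu e))"
proof -
  have "(\<Sum>u\<in>fst H \<union> mu ` snd H. f u) = (\<Sum>v\<in>fst H. f v) + (\<Sum>u\<in>mu ` snd H. f u)"
    using fr sg_finV[OF s] sg_finE[OF s] by (intro sum.union_disjoint) auto
  then show ?thesis by (simp add: fstS sum.reindex[OF mu_inj])
qed


lemma rstar_step:
  assumes c: "connected_graph H" and r: "r \<in> fst H"
    and phi: "\<forall>u\<in>fst H. \<forall>v\<in>fst H. lap H (\<phi> u) v = (if v = u then 1 else 0) - (if v = r then 1 else 0)"
  shows "Rstar (subdivision H) = 8 * Rstar H
     + 2 * real (card (snd H)) * (2 * real (card (snd H)) - 2 * real (card (fst H)) + 1)"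
proof -
  let ?S = "subdivision H"
  let ?d = "\<lambda>v. real (Defs.degree H v)"
  let ?dS = "\<lambda>v. real (Defs.degree ?S v)"
  let ?m = "real (card (snd H))"
  let ?n = "real (card (fst H))"
  define A where "A = (\<Sum>v\<in>fst H. ?d v * \<phi> v v)"
  define B where "B = (\<Sum>u\<in>fst H. \<Sum>w\<in>fst H. ?d u * ?d w * \<phi> u w)"
  define F where "F = (\<Sum>v\<in>fst H. \<Sum>w\<in>nbrs H v. \<phi> v w)"
  define Psi where "Psi x = (\<Sum>v\<in>fst H. ?d v * \<phi> v x)" for x
  define g where "g = (\<lambda>e x. (1/2) * (\<Sum>a\<in>e. \<phi> a x))"
  have rS: "r \<in> fst ?S" using r by (simp add: fstS)
  have phiS: "\<forall>u\<in>fst ?S. \<forall>v\<in>fst ?S. lap ?S (psi \<phi> u) v = (if v = u then 1 else 0) - (if v = r then 1 else 0)"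
    using psi_lap[OF r phi] by blast
  have RS: "Rstar ?S = 2 * real (card (snd ?S)) * (\<Sum>v\<in>fst ?S. ?dS v * psi \<phi> v v)
     - (\<Sum>u\<in>fst ?S. \<Sum>w\<in>fst ?S. ?dS u * ?dS w * psi \<phi> u w)"
    by (rule rstar_formula[OF simpleS connS[OF c] rS phiS])
  have RH: "Rstar H = 2 * ?m * A - B" unfolding A_def B_def by (rule rstar_formula[OF s c r phi])
  have FA: "F = A - (?n - 1)" unfolding F_def A_def by (rule foster[OF s r phi])
  have psiV: "psi \<phi> v = lift (\<phi> v)" if "v \<in> fst H" for v using that by (simp add: psi_def)
  have psiM: "psi \<phi> (mu e) = (\<lambda>w. lift (g e) w + (if w = mu e then 1/2 else 0))" if "e \<in> snd H" for e
    using that fr eps_muE by (simp add: psi_def g_def)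
  have fE: "finite (snd H)" using sg_finE[OF s] .
  have X: "(\<Sum>e\<in>snd H. \<Sum>b\<in>e. \<Sum>a\<in>e. \<phi> a b) = A + F"
  proof -
    have "2 * (\<Sum>e\<in>snd H. \<Sum>b\<in>e. \<Sum>a\<in>e. \<phi> a b)
        = (\<Sum>v\<in>fst H. \<Sum>w\<in>nbrs H v. \<Sum>b\<in>{v, w}. \<Sum>a\<in>{v, w}. \<phi> a b)"
      using edge_sum[OF s, of "\<lambda>e. \<Sum>b\<in>e. \<Sum>a\<in>e. \<phi> a b"] by simp
    also have "\<dots> = (\<Sum>v\<in>fst H. \<Sum>w\<in>nbrs H v. \<phi> v v + \<phi> w v + (\<phi> v w + \<phi> w w))"
    proof (intro sum.cong refl)
      fix v w assume "w \<in> nbrs H v"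
      then have "v \<noteq> w" using nbrs_irr[OF s, of v] by blast
      then show "(\<Sum>b\<in>{v, w}. \<Sum>a\<in>{v, w}. \<phi> a b) = \<phi> v v + \<phi> w v + (\<phi> v w + \<phi> w w)" by simp
    qed
    also have "\<dots> = (\<Sum>v\<in>fst H. \<Sum>w\<in>nbrs H v. \<phi> v v) + (\<Sum>v\<in>fst H. \<Sum>w\<in>nbrs H v. \<phi> w v)
        + ((\<Sum>v\<in>fst H. \<Sum>w\<in>nbrs H v. \<phi> v w) + (\<Sum>v\<in>fst H. \<Sum>w\<in>nbrs H v. \<phi> w w))"
      by (simp only: sum.distrib)
    also have "(\<Sum>v\<in>fst H. \<Sum>w\<in>nbrs H v. \<phi> w w) = (\<Sum>v\<in>fst H. \<Sum>w\<in>nbrs H v. \<phi> v v)"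
      using swap_sum[OF s, of "\<lambda>v w. \<phi> w w"] by simp
    also have "(\<Sum>v\<in>fst H. \<Sum>w\<in>nbrs H v. \<phi> w v) = F"
      unfolding F_def using swap_sum[OF s, of "\<lambda>v w. \<phi> w v"] by simp
    also have "(\<Sum>v\<in>fst H. \<Sum>w\<in>nbrs H v. \<phi> v v) = A"
      unfolding A_def using deg_sum[OF s, of "\<lambda>v. \<phi> v v"] by simp
    finally show ?thesis unfolding F_def by simp
  qed
  have A': "(\<Sum>v\<in>fst ?S. ?dS v * psi \<phi> v v) = 2 * A + (A + F) + ?m"
  proof -
    have "(\<Sum>v\<in>fst ?S. ?dS v * psi \<phi> v v) = (\<Sum>v\<in>fst H. ?dS v * psi \<phi> v v)
        + (\<Sum>e\<in>snd H. ?dS (mu e) * psi \<phi> (mu e) (mu e))" by (rule sumS)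
    also have "(\<Sum>v\<in>fst H. ?dS v * psi \<phi> v v) = 2 * A"
      unfolding A_def sum_distrib_left
      by (rule sum.cong) (simp_all add: degS_V psiV lift_V)
    also have "(\<Sum>e\<in>snd H. ?dS (mu e) * psi \<phi> (mu e) (mu e)) = (\<Sum>e\<in>snd H. (\<Sum>b\<in>e. \<Sum>a\<in>e. \<phi> a b) + 1)"
    proof (rule sum.cong[OF refl])
      fix e assume e: "e \<in> snd H"
      have "psi \<phi> (mu e) (mu e) = (\<Sum>b\<in>e. g e b) + 1/2" using psiM[OF e] lift_mu[OF e] by simp
      then show "?dS (mu e) * psi \<phi> (mu e) (mu e) = (\<Sum>b\<in>e. \<Sum>a\<in>e. \<phi> a b) + 1"
        using degS_M[OF e] by (simp add: g_def sum_divide_distrib[symmetric] algebra_simps)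
    qed
    also have "\<dots> = (A + F) + ?m" using X by (simp add: sum.distrib)
    finally show ?thesis by simp
  qed
  have Psi': "(\<Sum>u\<in>fst ?S. ?dS u * psi \<phi> u w) = 2 * lift Psi w + (if w \<in> mu ` snd H then 1 else 0)" for w
  proof -
    have "(\<Sum>u\<in>fst ?S. ?dS u * psi \<phi> u w) = (\<Sum>v\<in>fst H. ?dS v * psi \<phi> v w)
        + (\<Sum>e\<in>snd H. ?dS (mu e) * psi \<phi> (mu e) w)" by (rule sumS)
    also have "(\<Sum>v\<in>fst H. ?dS v * psi \<phi> v w) = lift Psi w"
    proof -
      have "(\<Sum>v\<in>fst H. ?dS v * psi \<phi> v w) = (\<Sum>v\<in>fst H. ?d v * lift (\<phi> v) w)"
        by (rule sum.cong) (simp_all add: degS_V psiV)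
      also have "\<dots> = lift Psi w" unfolding Psi_def lift_sum lift_scale ..
      finally show ?thesis .
    qed
    also have "(\<Sum>e\<in>snd H. ?dS (mu e) * psi \<phi> (mu e) w)
        = (\<Sum>e\<in>snd H. lift (\<lambda>x. \<Sum>a\<in>e. \<phi> a x) w) + (\<Sum>e\<in>snd H. (if mu e = w then 1 else 0))"
    proof -
      have "(\<Sum>e\<in>snd H. ?dS (mu e) * psi \<phi> (mu e) w)
          = (\<Sum>e\<in>snd H. lift (\<lambda>x. \<Sum>a\<in>e. \<phi> a x) w + (if mu e = w then 1 else 0))"
      proof (rule sum.cong[OF refl])
        fix e assume e: "e \<in> snd H"
        have "2 * lift (g e) w = lift (\<lambda>x. \<Sum>a\<in>e. \<phi> a x) w"
          unfolding g_def lift_scale by simp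
        then show "?dS (mu e) * psi \<phi> (mu e) w = lift (\<lambda>x. \<Sum>a\<in>e. \<phi> a x) w + (if mu e = w then 1 else 0)"
          using psiM[OF e] degS_M[OF e] by (auto simp: algebra_simps)
      qed
      then show ?thesis by (simp add: sum.distrib)
    qed
    also have "(\<Sum>e\<in>snd H. lift (\<lambda>x. \<Sum>a\<in>e. \<phi> a x) w) = lift Psi w"
    proof -
      have "(\<Sum>e\<in>snd H. lift (\<lambda>x. \<Sum>a\<in>e. \<phi> a x) w) = lift (\<lambda>x. \<Sum>e\<in>snd H. \<Sum>a\<in>e. \<phi> a x) w"
        by (rule lift_sum[symmetric])
      also have "(\<lambda>x. \<Sum>e\<in>snd H. \<Sum>a\<in>e. \<phi> a x) = Psi"
        unfolding Psi_def by (rule ext) (rule inc_sum[OF s])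
      finally show ?thesis .
    qed
    also have "(\<Sum>e\<in>snd H. (if mu e = w then 1 else 0)) = (if w \<in> mu ` snd H then (1::real) else 0)"
    proof -
      have "(\<Sum>x\<in>mu ` snd H. (if x = w then 1 else 0)) = (\<Sum>e\<in>snd H. (if mu e = w then (1::real) else 0))"
        by (simp add: sum.reindex[OF mu_inj])
      moreover have "(\<Sum>x\<in>mu ` snd H. (if x = w then 1 else 0)) = (if w \<in> mu ` snd H then (1::real) else 0)"
        using fE by (simp add: sum.delta)
      ultimately show ?thesis by simp
    qed
    finally show ?thesis by simp
  qed
  have B': "(\<Sum>u\<in>fst ?S. \<Sum>w\<in>fst ?S. ?dS u * ?dS w * psi \<phi> u w) = 8 * B + 2 * ?m"
  proof -
    have "(\<Sum>u\<in>fst ?S. \<Sum>w\<in>fst ?S. ?dS u * ?dS w * psi \<phi> u w)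
        = (\<Sum>w\<in>fst ?S. \<Sum>u\<in>fst ?S. ?dS w * (?dS u * psi \<phi> u w))"
      by (subst sum.swap) (simp add: algebra_simps)
    also have "\<dots> = (\<Sum>w\<in>fst ?S. ?dS w * (2 * lift Psi w + (if w \<in> mu ` snd H then 1 else 0)))"
      by (simp add: sum_distrib_left[symmetric] Psi')
    also have "\<dots> = (\<Sum>v\<in>fst H. ?dS v * (2 * lift Psi v + (if v \<in> mu ` snd H then 1 else 0)))
       + (\<Sum>e\<in>snd H. ?dS (mu e) * (2 * lift Psi (mu e) + (if mu e \<in> mu ` snd H then 1 else 0)))"
      by (rule sumS)
    also have "(\<Sum>v\<in>fst H. ?dS v * (2 * lift Psi v + (if v \<in> mu ` snd H then 1 else 0)))
        = 4 * (\<Sum>v\<in>fst H. ?d v * Psi v)"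
      unfolding sum_distrib_left
    proof (rule sum.cong[OF refl])
      fix v assume v: "v \<in> fst H"
      have "v \<notin> mu ` snd H" using fr v by auto
      then show "?dS v * (2 * lift Psi v + (if v \<in> mu ` snd H then 1 else 0)) = 4 * (?d v * Psi v)"
        using v by (simp add: degS_V lift_V)
    qed
    also have "(\<Sum>e\<in>snd H. ?dS (mu e) * (2 * lift Psi (mu e) + (if mu e \<in> mu ` snd H then 1 else 0)))
        = 4 * (\<Sum>e\<in>snd H. \<Sum>a\<in>e. Psi a) + 2 * ?m"
    proof -
      have "(\<Sum>e\<in>snd H. ?dS (mu e) * (2 * lift Psi (mu e) + (if mu e \<in> mu ` snd H then 1 else 0)))
          = (\<Sum>e\<in>snd H. 4 * (\<Sum>a\<in>e. Psi a) + 2)"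
        by (rule sum.cong[OF refl]) (simp add: degS_M lift_mu)
      then show ?thesis by (simp add: sum.distrib sum_distrib_left)
    qed
    also have "(\<Sum>e\<in>snd H. \<Sum>a\<in>e. Psi a) = (\<Sum>v\<in>fst H. ?d v * Psi v)" by (rule inc_sum[OF s])
    also have "(\<Sum>v\<in>fst H. ?d v * Psi v) = B"
      unfolding B_def Psi_def sum_distrib_left
      by (subst sum.swap) (simp add: algebra_simps)
    finally show ?thesis by simp
  qed
  have "Rstar ?S = 2 * (2 * ?m) * (2 * A + (A + F) + ?m) - (8 * B + 2 * ?m)"
    using RS A' B' cardES by simp
  then show ?thesis using RH FA by (simp add: algebra_simps)
qed

end




definition inv_rank :: "'a sv graph \<Rightarrow> nat \<Rightarrow> bool" where
  "inv_rank H k \<longleftrightarrow> (\<forall>v\<in>fst H. rank v \<le> k) \<and> (\<forall>e\<in>snd H. \<exists>v\<in>e. rank v = k)"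

lemma rank_mu_edge:
  assumes s: "simple_graph H" and i: "inv_rank H k" and e: "e \<in> snd H"
  shows "rank (mu e) = Suc k"
proof -
  obtain a b where ab: "e = {a, b}" "a \<in> fst H" "b \<in> fst H" using sg_edge[OF s e] by blast
  have "rank a \<le> k" "rank b \<le> k" using i ab by (auto simp: inv_rank_def)
  moreover have "rank a = k \<or> rank b = k" using i e ab by (auto simp: inv_rank_def)
  ultimately show ?thesis using ab by (auto simp: rank_mu max_def)
qed

lemma inv_fresh:
  assumes s: "simple_graph H" and i: "inv_rank H k"
  shows "\<forall>e\<in>snd H. mu e \<notin> fst H"
proof
  fix e assume e: "e \<in> snd H"
  show "mu e \<notin> fst H"
  proof
    assume "mu e \<in> fst H"
    then have "rank (mu e) \<le> k" using i by (auto simp: inv_rank_def)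
    then show False using rank_mu_edge[OF s i e] by simp
  qed
qed

lemma inv_step:
  assumes s: "simple_graph H" and i: "inv_rank H k"
  shows "inv_rank (subdivision H) (Suc k)"
proof -
  interpret subd H using s inv_fresh[OF s i] by unfold_locales
  show ?thesis unfolding inv_rank_def
  proof (intro conjI ballI)
    fix v assume "v \<in> fst (subdivision H)"
    then show "rank v \<le> Suc k" using i rank_mu_edge[OF s i]
      by (auto simp: fstS inv_rank_def)
  next
    fix f assume "f \<in> snd (subdivision H)"
    then obtain u e where "e \<in> snd H" "u \<in> e" "f = {u, mu e}" by (auto simp: sndS)
    then show "\<exists>v\<in>f. rank v = Suc k" using rank_mu_edge[OF s i] by auto
  qed
qed

lemma phi_exists:
  assumes s: "simple_graph H" and c: "connected_graph H" and r: "r \<in> fst H"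
  shows "\<exists>\<phi>. \<forall>u\<in>fst H. \<forall>v\<in>fst H. lap H (\<phi> u) v = (if v = u then 1 else 0) - (if v = r then 1 else 0)"
proof -
  have "\<forall>u\<in>fst H. \<exists>x. \<forall>v\<in>fst H. lap H x v = (if v = u then 1 else 0) - (if v = r then 1 else 0)"
  proof
    fix u assume u: "u \<in> fst H"
    have "(\<Sum>w\<in>fst H. (if w = u then 1 else 0) - (if w = r then 1 else (0::real))) = 0"
      using u r sg_finV[OF s] by (simp add: sum_subtractf)
    then show "\<exists>x. \<forall>v\<in>fst H. lap H x v = (if v = u then 1 else 0) - (if v = r then 1 else 0)"
      by (rule potential_exists[OF s c r])
  qed
  then show ?thesis by (rule bchoice)
qed

lemma step_full:
  assumes s: "simple_graph H" and c: "connected_graph H" and i: "inv_rank H k"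
  shows "Rstar (subdivision H) = 8 * Rstar H
     + 2 * real (card (snd H)) * (2 * real (card (snd H)) - 2 * real (card (fst H)) + 1)"
proof -
  interpret subd H using s inv_fresh[OF s i] by unfold_locales
  obtain r where r: "r \<in> fst H" using c by (auto simp: connected_graph_def)
  obtain \<phi> where phi: "\<forall>u\<in>fst H. \<forall>v\<in>fst H. lap H (\<phi> u) v = (if v = u then 1 else 0) - (if v = r then 1 else 0)"
    using phi_exists[OF s c r] by blast
  show ?thesis by (rule rstar_step[OF c r phi])
qed




definition unO :: "'a sv \<Rightarrow> 'a" where "unO x = (case x of Orig a \<Rightarrow> a | Mid p \<Rightarrow> undefined)"

lemma unO_Orig[simp]: "unO (Orig a) = a" by (simp add: unO_def)

lemma inj_Orig: "inj Orig" by (simp add: inj_def)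

lemma img_in: "Orig ` A \<in> (\<lambda>e. Orig ` e) ` E \<longleftrightarrow> A \<in> E"
proof
  assume "Orig ` A \<in> (\<lambda>e. Orig ` e) ` E"
  then obtain e where e: "e \<in> E" "Orig ` A = Orig ` e" by (rule imageE)
  then have "A = e" by (simp add: inj_image_eq_iff[OF inj_Orig])
  then show "A \<in> E" using e by simp
qed simp

lemma fstL: "fst (lift_graph G) = Orig ` fst G" by (simp add: lift_graph_def)
lemma sndL: "snd (lift_graph G) = (\<lambda>e. Orig ` e) ` snd G" by (simp add: lift_graph_def)

lemma nbrsL: "nbrs (lift_graph G) (Orig v) = Orig ` nbrs G v"
proof (rule Set.set_eqI, rule iffI)
  fix x assume x: "x \<in> nbrs (lift_graph G) (Orig v)"
  then have x1: "x \<in> Orig ` fst G" and x2: "{Orig v, x} \<in> (\<lambda>e. Orig ` e) ` snd G"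
    unfolding nbrs_def fstL sndL by simp_all
  obtain w where w: "x = Orig w" "w \<in> fst G" using x1 by blast
  have "Orig ` {v, w} = {Orig v, x}" using w by simp
  then have "Orig ` {v, w} \<in> (\<lambda>e. Orig ` e) ` snd G" using x2 by simp
  then have "{v, w} \<in> snd G" by (simp only: img_in)
  then have "w \<in> nbrs G v" using w by (simp add: nbrs_def)
  then show "x \<in> Orig ` nbrs G v" using w by blast
next
  fix x assume "x \<in> Orig ` nbrs G v"
  then obtain w where w: "x = Orig w" "w \<in> nbrs G v" by blast
  then have wV: "w \<in> fst G" and E: "{v, w} \<in> snd G" by (simp_all add: nbrs_def)
  have "Orig ` {v, w} \<in> (\<lambda>e. Orig ` e) ` snd G" using E by (simp only: img_in)
  then have "{Orig v, x} \<in> snd (lift_graph G)" using w by (simp add: sndL)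
  moreover have "x \<in> fst (lift_graph G)" using w wV by (simp add: fstL)
  ultimately show "x \<in> nbrs (lift_graph G) (Orig v)" by (simp add: nbrs_def)
qed

lemma simpleL: "simple_graph G \<Longrightarrow> simple_graph (lift_graph G)"
proof -
  assume s: "simple_graph G"
  show ?thesis unfolding simple_graph_def
  proof (intro conjI ballI)
    show "finite (fst (lift_graph G))" using sg_finV[OF s] by (simp add: fstL)
    fix f assume "f \<in> snd (lift_graph G)"
    then obtain e where e: "e \<in> snd G" "f = Orig ` e" by (auto simp: sndL)
    obtain a b where ab: "e = {a, b}" "a \<noteq> b" "a \<in> fst G" "b \<in> fst G" using sg_edge[OF s e(1)] by blast
    show "\<exists>u v. f = {u, v} \<and> u \<noteq> v \<and> u \<in> fst (lift_graph G) \<and> v \<in> fst (lift_graph G)"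
      using ab e by (intro exI[of _ "Orig a"] exI[of _ "Orig b"]) (simp add: fstL)
  qed
qed

lemma adjL: "adj G a b \<Longrightarrow> adj (lift_graph G) (Orig a) (Orig b)"
proof -
  assume "adj G a b"
  then have "Orig ` {a, b} \<in> (\<lambda>e. Orig ` e) ` snd G" by (simp only: img_in adj_def)
  then show ?thesis by (simp add: adj_def sndL)
qed

lemma connL: "connected_graph G \<Longrightarrow> connected_graph (lift_graph G)"
proof -
  assume c: "connected_graph G"
  have lift: "(adj (lift_graph G))\<^sup>*\<^sup>* (Orig a) (Orig b)" if "(adj G)\<^sup>*\<^sup>* a b" for a b
    using that
  proof (induction rule: rtranclp_induct)
    case base then show ?case by simp
  next
    case (step y z) then show ?case using adjL by (meson rtranclp.rtrancl_into_rtrancl)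
  qed
  show ?thesis unfolding connected_graph_def
  proof (intro conjI ballI)
    show "fst (lift_graph G) \<noteq> {}" using c by (simp add: connected_graph_def fstL)
    fix u v assume "u \<in> fst (lift_graph G)" "v \<in> fst (lift_graph G)"
    then obtain a b where "u = Orig a" "v = Orig b" "a \<in> fst G" "b \<in> fst G" by (auto simp: fstL)
    then show "(adj (lift_graph G))\<^sup>*\<^sup>* u v" using c lift by (auto simp: connected_graph_def)
  qed
qed

lemma degL: "simple_graph G \<Longrightarrow> v \<in> fst G \<Longrightarrow> Defs.degree (lift_graph G) (Orig v) = Defs.degree G v"
  using degree_nbrs[OF simpleL, of G "Orig v"] degree_nbrs[of G v]
  by (simp add: fstL nbrsL card_image inj_on_subset[OF inj_Orig])

lemma cardEL: "card (snd (lift_graph G)) = card (snd G)"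
proof -
  have "inj_on (\<lambda>e. Orig ` e) (snd G)"
    by (rule inj_onI) (simp add: inj_image_eq_iff[OF inj_Orig])
  then show ?thesis by (simp add: sndL card_image)
qed

lemma cardVL: "card (fst (lift_graph G)) = card (fst G)"
  by (simp add: fstL card_image inj_on_subset[OF inj_Orig])

lemma invL: "simple_graph G \<Longrightarrow> inv_rank (lift_graph G) 0"
proof -
  assume s: "simple_graph G"
  show ?thesis unfolding inv_rank_def
  proof (intro conjI ballI)
    fix v assume "v \<in> fst (lift_graph G)"
    then show "rank v \<le> 0" by (auto simp: fstL)
  next
    fix f assume "f \<in> snd (lift_graph G)"
    then obtain e where e: "e \<in> snd G" "f = Orig ` e" by (auto simp: sndL)
    obtain a b where ab: "e = {a, b}" using sg_edge[OF s e(1)] by blast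
    show "\<exists>v\<in>f. rank v = 0" using ab e by auto
  qed
qed

lemma rstarL:
  assumes s: "simple_graph G" and c: "connected_graph G"
  shows "Rstar (lift_graph G) = Rstar G"
proof -
  let ?L = "lift_graph G"
  obtain r where r: "r \<in> fst G" using c by (auto simp: connected_graph_def)
  obtain \<phi> where phi: "\<forall>u\<in>fst G. \<forall>v\<in>fst G. lap G (\<phi> u) v = (if v = u then 1 else 0) - (if v = r then 1 else 0)"
    using phi_exists[OF s c r] by blast
  define \<phi>L where "\<phi>L x y = \<phi> (unO x) (unO y)" for x y
  have io: "inj_on Orig X" for X by (simp add: inj_on_def)
  have lapL: "lap ?L y (Orig v) = (\<Sum>w\<in>nbrs G v. y (Orig v) - y (Orig w))" for y v
    unfolding lap_def nbrsL by (simp only: sum.reindex[OF io] comp_def)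
  have phiL: "\<forall>u\<in>fst ?L. \<forall>v\<in>fst ?L. lap ?L (\<phi>L u) v = (if v = u then 1 else 0) - (if v = Orig r then 1 else 0)"
  proof (intro ballI)
    fix u v assume "u \<in> fst ?L" "v \<in> fst ?L"
    then obtain a b where ab: "u = Orig a" "v = Orig b" "a \<in> fst G" "b \<in> fst G" by (auto simp: fstL)
    have "lap ?L (\<phi>L u) v = lap G (\<phi> a) b" using ab by (simp only: lapL) (simp add: \<phi>L_def lap_def)
    then show "lap ?L (\<phi>L u) v = (if v = u then 1 else 0) - (if v = Orig r then 1 else 0)"
      using phi ab by simp
  qed
  have rL: "Orig r \<in> fst ?L" using r by (simp add: fstL)
  have R1: "Rstar ?L = 2 * real (card (snd ?L)) * (\<Sum>v\<in>fst ?L. real (Defs.degree ?L v) * \<phi>L v v)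
     - (\<Sum>u\<in>fst ?L. \<Sum>w\<in>fst ?L. real (Defs.degree ?L u) * real (Defs.degree ?L w) * \<phi>L u w)"
    by (rule rstar_formula[OF simpleL[OF s] connL[OF c] rL phiL])
  have R2: "Rstar G = 2 * real (card (snd G)) * (\<Sum>v\<in>fst G. real (Defs.degree G v) * \<phi> v v)
     - (\<Sum>u\<in>fst G. \<Sum>w\<in>fst G. real (Defs.degree G u) * real (Defs.degree G w) * \<phi> u w)"
    by (rule rstar_formula[OF s c r phi])
  have "(\<Sum>v\<in>fst ?L. real (Defs.degree ?L v) * \<phi>L v v) = (\<Sum>v\<in>fst G. real (Defs.degree G v) * \<phi> v v)"
    unfolding fstL sum.reindex[OF io] comp_def
    by (rule sum.cong) (simp_all add: degL[OF s] \<phi>L_def)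
  moreover have "(\<Sum>u\<in>fst ?L. \<Sum>w\<in>fst ?L. real (Defs.degree ?L u) * real (Defs.degree ?L w) * \<phi>L u w)
      = (\<Sum>u\<in>fst G. \<Sum>w\<in>fst G. real (Defs.degree G u) * real (Defs.degree G w) * \<phi> u w)"
    unfolding fstL sum.reindex[OF io] comp_def
    by (intro sum.cong refl) (simp add: degL[OF s] \<phi>L_def)
  moreover have "card (snd ?L) = card (snd G)" by (rule cardEL)
  ultimately show ?thesis using R1 R2 by simp
qed

lemma iter_all:
  fixes G :: "'a graph"
  assumes s: "simple_graph G" and c: "connected_graph G"
  shows "simple_graph (iter_subdivision k G) \<and> connected_graph (iter_subdivision k G)
    \<and> inv_rank (iter_subdivision k G) k
    \<and> real (card (fst (iter_subdivision k G))) = real (card (fst G)) + (2 ^ k - 1) * real (card (snd G))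
    \<and> real (card (snd (iter_subdivision k G))) = 2 ^ k * real (card (snd G))
    \<and> Rstar (iter_subdivision k G) = 8 ^ k * Rstar G
           + (8 ^ k - 2 ^ k) / 3 * real (card (snd G))
               * (2 * real (card (snd G)) - 2 * real (card (fst G)) + 1)"
proof (induction k)
  case 0
  show ?case using simpleL[OF s] connL[OF c] invL[OF s] rstarL[OF s c]
    by (simp add: iter_subdivision_def cardEL cardVL)
next
  case (Suc k)
  let ?H = "iter_subdivision k G"
  have eq: "iter_subdivision (Suc k) G = subdivision ?H" by (simp add: iter_subdivision_def)
  have sH: "simple_graph ?H" and cH: "connected_graph ?H" and iH: "inv_rank ?H k"
    using Suc.IH by auto
  interpret subd ?H using sH inv_fresh[OF sH iH] by unfold_locales
  let ?m = "real (card (snd G))"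
  let ?n = "real (card (fst G))"
  have nV: "real (card (fst ?H)) = ?n + (2 ^ k - 1) * ?m" and mE: "real (card (snd ?H)) = 2 ^ k * ?m"
    and R: "Rstar ?H = 8 ^ k * Rstar G + (8 ^ k - 2 ^ k) / 3 * ?m * (2 * ?m - 2 * ?n + 1)"
    using Suc.IH by auto
  have RS: "Rstar (subdivision ?H) = 8 * Rstar ?H
     + 2 * real (card (snd ?H)) * (2 * real (card (snd ?H)) - 2 * real (card (fst ?H)) + 1)"
    by (rule step_full[OF sH cH iH])
  have "Rstar (subdivision ?H) = 8 ^ Suc k * Rstar G + (8 ^ Suc k - 2 ^ Suc k) / 3 * ?m * (2 * ?m - 2 * ?n + 1)"
    unfolding RS R nV mE by (simp add: field_simps)
  moreover have "real (card (fst (subdivision ?H))) = ?n + (2 ^ Suc k - 1) * ?m"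
    using cardVS nV mE by (simp add: algebra_simps)
  moreover have "real (card (snd (subdivision ?H))) = 2 ^ Suc k * ?m"
    using cardES mE by simp
  ultimately show ?case using simpleS connS[OF cH] inv_step[OF sH iH] eq by simp
qed

theorem theorem3p2:
  fixes G :: "'a graph" and k :: nat
  assumes "simple_graph G" and "connected_graph G" and "card (fst G) \<ge> 2"
  shows "Rstar (iter_subdivision k G) =
           8 ^ k * Rstar G
           + (8 ^ k - 2 ^ k) / 3 * real (card (snd G))
               * (2 * real (card (snd G)) - 2 * real (card (fst G)) + 1)"
  using iter_all[OF assms(1,2), of k] by blast


end
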